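(* Let $(G,t)$ be an infinite biosphere. Then: (1) $\mathrm{CONV}$ is downward generic; (2) $\mathrm{CONV}\cap\mathrm{REF}$ is downward generic; (3) $\mathrm{IAP}$ is downward generic.
   Context: An infinite biosphere is a directed graph $G$ together with a function $t$ assigning a real number $t(v)$ to each vertex, such that: (1) if $v$ is a parent of $w$ (edge from $v$ to $w$) then $t(v)<t(w)$; (2) for every $r\in\mathbb R$ at most finitely many vertices $v$ have $t(v)<r$; (3) every vertex has finitely many children; (4) $G$ is infinite. $v$ is an ancestor of $w$ (and $w$ a descendant of $v$) if there is a directed path $v=v_1,\dots,v_n=w$ with $n>1$. A $G$-subset is a set of vertices. $\mathrm{IAP}$ is the set of $G$-subsets $S$ such that no $v\in S$ has both infinitely many descendants in $S$ and infinitely many non-descendants in $S$. $\mathrm{CONV}$ is the set of $G$-subsets $S$ such that every $v\in G$ having an ancestor in $S$ and a descendant in $S$ lies in $S$. $\mathrm{REF}$ is the set of $G$-subsets $S$ such that every $v\in S$ which has infinitely many descendants in $G$ has infinitely many descendants in $S$. For a nonempty linear order $(X,<)$, a descending chain of $G$-subsets indexed by $X$ is a family $\{C_\alpha\}_{\alpha\in X}$ with $C_\beta\subseteq C_\alpha$ whenever $\alpha<\beta$. A set $T$ of $G$-subsets is downward generic if for every descending chain $\{C_\alpha\}_{\alpha\in X}$ of nonempty $G$-subsets with each $C_\alpha\in T$, $\bigcap_\alpha C_\alpha\in T$. *)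

theory Defs
  imports Complex_Main
begin

definition infinite_biosphere :: "'a set \<Rightarrow> ('a \<times> 'a) set \<Rightarrow> ('a \<Rightarrow> real) \<Rightarrow> bool" where
  "infinite_biosphere V E t \<longleftrightarrow>
     E \<subseteq> V \<times> V \<and>
     (\<forall>(v, w) \<in> E. t v < t w) \<and>
     (\<forall>r::real. finite {v \<in> V. t v < r}) \<and>
     (\<forall>v \<in> V. finite {w. (v, w) \<in> E}) \<and>
     infinite V"

definition descendants :: "('a \<times> 'a) set \<Rightarrow> 'a \<Rightarrow> 'a set" where
  "descendants E v = {w. (v, w) \<in> E\<^sup>+}"

definition IAP :: "'a set \<Rightarrow> ('a \<times> 'a) set \<Rightarrow> 'a set set" where
  "IAP V E = {S. S \<subseteq> V \<and>
     (\<forall>v \<in> S. \<not> (infinite (descendants E v \<inter> S) \<and> infinite (S - descendants E v)))}"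

definition CONV :: "'a set \<Rightarrow> ('a \<times> 'a) set \<Rightarrow> 'a set set" where
  "CONV V E = {S. S \<subseteq> V \<and>
     (\<forall>v \<in> V. (\<exists>a \<in> S. (a, v) \<in> E\<^sup>+) \<and> (\<exists>d \<in> S. (v, d) \<in> E\<^sup>+) \<longrightarrow> v \<in> S)}"

definition REF :: "'a set \<Rightarrow> ('a \<times> 'a) set \<Rightarrow> 'a set set" where
  "REF V E = {S. S \<subseteq> V \<and>
     (\<forall>v \<in> S. infinite (descendants E v) \<longrightarrow> infinite (descendants E v \<inter> S))}"

definition strict_linear_order_on :: "'i set \<Rightarrow> ('i \<Rightarrow> 'i \<Rightarrow> bool) \<Rightarrow> bool" where
  "strict_linear_order_on X lt \<longleftrightarrow>
     (\<forall>x \<in> X. \<not> lt x x) \<and>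
     (\<forall>x \<in> X. \<forall>y \<in> X. \<forall>z \<in> X. lt x y \<and> lt y z \<longrightarrow> lt x z) \<and>
     (\<forall>x \<in> X. \<forall>y \<in> X. x \<noteq> y \<longrightarrow> lt x y \<or> lt y x)"

text \<open>Downward genericity, with index linear orders (X, lt) carried by the type 'i
  (the theorem is stated for an arbitrary type 'i).\<close>
definition downward_generic :: "'i itself \<Rightarrow> 'a set set \<Rightarrow> bool" where
  "downward_generic _ T \<longleftrightarrow>
     (\<forall>(X::'i set) lt (C::'i \<Rightarrow> 'a set).
        X \<noteq> {} \<and> strict_linear_order_on X lt \<and>
        (\<forall>\<alpha> \<in> X. \<forall>\<beta> \<in> X. lt \<alpha> \<beta> \<longrightarrow> C \<beta> \<subseteq> C \<alpha>) \<and>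
        (\<forall>\<alpha> \<in> X. C \<alpha> \<noteq> {} \<and> C \<alpha> \<in> T)
        \<longrightarrow> (\<Inter>\<alpha> \<in> X. C \<alpha>) \<in> T)"

end

theory Submission
  imports Defs
begin

lemma chain_meets_finite:
  assumes ne: "X \<noteq> {}" and slo: "strict_linear_order_on X lt"
    and desc: "\<forall>\<alpha> \<in> X. \<forall>\<beta> \<in> X. lt \<alpha> \<beta> \<longrightarrow> C \<beta> \<subseteq> C \<alpha>"
    and fin: "finite A" and meet: "\<forall>\<alpha> \<in> X. C \<alpha> \<inter> A \<noteq> {}"
  shows "(\<Inter>\<alpha> \<in> X. C \<alpha>) \<inter> A \<noteq> {}"
proof -
  obtain a0 where "a0 \<in> X" using ne by blast
  then obtain a where aX: "a \<in> X" and amin: "\<forall>b. b \<in> X \<longrightarrow> card (C a \<inter> A) \<le> card (C b \<inter> A)"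
    using ex_has_least_nat[of "\<lambda>b. b \<in> X" a0 "\<lambda>b. card (C b \<inter> A)"] by blast
  have sub: "C a \<inter> A \<subseteq> C b" if bX: "b \<in> X" for b
  proof -
    consider "b = a" | "lt b a" | "lt a b" using slo aX bX unfolding strict_linear_order_on_def by blast
    then show ?thesis
    proof cases
      case 1 then show ?thesis by blast
    next
      case 2 then show ?thesis using desc aX bX by blast
    next
      case 3
      then have s: "C b \<inter> A \<subseteq> C a \<inter> A" using desc aX bX by blast
      moreover have "card (C a \<inter> A) \<le> card (C b \<inter> A)" using amin bX by blast
      ultimately have "C b \<inter> A = C a \<inter> A"
        using card_subset_eq[of "C a \<inter> A" "C b \<inter> A"] fin card_mono[OF _ s]
        by (meson finite_Int le_antisym)
      then show ?thesis by blast
    qed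
  qed
  have "C a \<inter> A \<subseteq> (\<Inter>\<alpha> \<in> X. C \<alpha>) \<inter> A" using sub by blast
  moreover have "C a \<inter> A \<noteq> {}" using meet aX by blast
  ultimately show ?thesis by blast
qed

lemma first_cross:
  assumes "(v, w) \<in> E\<^sup>+" "t v < r" "t w \<ge> (r::real)"
  shows "\<exists>p u. (v, p) \<in> E\<^sup>* \<and> (p, u) \<in> E \<and> t p < r \<and> t u \<ge> r \<and> (u, w) \<in> E\<^sup>*"
  using assms
proof (induction rule: trancl_induct)
  case (base y)
  then show ?case by blast
next
  case (step y z)
  show ?case
  proof (cases "t y \<ge> r")
    case True
    then obtain p u where "(v, p) \<in> E\<^sup>*" "(p, u) \<in> E" "t p < r" "t u \<ge> r" "(u, y) \<in> E\<^sup>*"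
      using step by blast
    moreover have "(u, z) \<in> E\<^sup>*" using calculation(5) step(2) by (meson rtrancl.rtrancl_into_rtrancl)
    ultimately show ?thesis by blast
  next
    case False
    then show ?thesis using step by (meson not_le r_into_rtrancl rtrancl_refl trancl_into_rtrancl)
  qed
qed

lemma trancl_V: assumes "E \<subseteq> V \<times> V" "(a, b) \<in> E\<^sup>+" shows "b \<in> V"
  using assms(2) by (induction rule: trancl_induct) (use assms(1) in auto)

lemma CONV_V: "S \<in> CONV V E \<Longrightarrow> S \<subseteq> V"
  unfolding CONV_def by simp

lemma CONV_D: "S \<in> CONV V E \<Longrightarrow> v \<in> V \<Longrightarrow> a \<in> S \<Longrightarrow> (a, v) \<in> E\<^sup>+
  \<Longrightarrow> d \<in> S \<Longrightarrow> (v, d) \<in> E\<^sup>+ \<Longrightarrow> v \<in> S"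
  unfolding CONV_def by blast

lemma CONV_I: "S \<subseteq> V \<Longrightarrow> (\<And>v a d. v \<in> V \<Longrightarrow> a \<in> S \<Longrightarrow> (a, v) \<in> E\<^sup>+
  \<Longrightarrow> d \<in> S \<Longrightarrow> (v, d) \<in> E\<^sup>+ \<Longrightarrow> v \<in> S) \<Longrightarrow> S \<in> CONV V E"
  unfolding CONV_def by blast

lemma conv_inter:
  assumes ne: "X \<noteq> {}" and cs: "\<forall>\<alpha> \<in> X. C \<alpha> \<in> CONV V E"
  shows "(\<Inter>\<alpha> \<in> X. C \<alpha>) \<in> CONV V E"
proof (rule CONV_I)
  obtain a where aX: "a \<in> X" using ne by blast
  have "C a \<subseteq> V" using cs aX CONV_V by blast
  then show "(\<Inter>\<alpha> \<in> X. C \<alpha>) \<subseteq> V" using aX by blast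
next
  fix v a1 d1
  assume vV: "v \<in> V" and a1: "a1 \<in> (\<Inter>\<alpha> \<in> X. C \<alpha>)" and e1: "(a1, v) \<in> E\<^sup>+"
    and d1: "d1 \<in> (\<Inter>\<alpha> \<in> X. C \<alpha>)" and e2: "(v, d1) \<in> E\<^sup>+"
  show "v \<in> (\<Inter>\<alpha> \<in> X. C \<alpha>)"
  proof (rule INT_I)
    fix \<alpha> assume aX: "\<alpha> \<in> X"
    have "C \<alpha> \<in> CONV V E" using cs aX by blast
    moreover have "a1 \<in> C \<alpha>" using a1 aX by blast
    moreover have "d1 \<in> C \<alpha>" using d1 aX by blast
    ultimately show "v \<in> C \<alpha>" using vV e1 e2 CONV_D by metis
  qed
qed

theorem mainTheorem6:
  fixes V :: "'a set" and E :: "('a \<times> 'a) set" and t :: "'a \<Rightarrow> real"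
  assumes "infinite_biosphere V E t"
  shows "downward_generic TYPE('i) (CONV V E) \<and>
         downward_generic TYPE('i) (CONV V E \<inter> REF V E) \<and>
         downward_generic TYPE('i) (IAP V E)"
proof -
  have EV: "E \<subseteq> V \<times> V" and tE: "\<forall>(v, w) \<in> E. t v < t w"
    and finr: "\<forall>r::real. finite {v \<in> V. t v < r}"
    and finch: "\<forall>v \<in> V. finite {w. (v, w) \<in> E}"
    using assms unfolding infinite_biosphere_def by auto
  have conv: "(\<Inter>\<alpha> \<in> X. C \<alpha>) \<in> CONV V E"
    if ne: "X \<noteq> {}" and cs: "\<forall>\<alpha> \<in> X. C \<alpha> \<in> CONV V E" for X :: "'i set" and C
    using conv_inter[OF ne cs] .
  have G1: "downward_generic TYPE('i) (CONV V E)"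
    unfolding downward_generic_def
  proof (intro allI impI)
    fix X :: "'i set" and lt C
    assume "X \<noteq> {} \<and> strict_linear_order_on X lt \<and>
        (\<forall>\<alpha> \<in> X. \<forall>\<beta> \<in> X. lt \<alpha> \<beta> \<longrightarrow> C \<beta> \<subseteq> C \<alpha>) \<and>
        (\<forall>\<alpha> \<in> X. C \<alpha> \<noteq> {} \<and> C \<alpha> \<in> CONV V E)"
    then have "X \<noteq> {}" "\<forall>\<alpha> \<in> X. C \<alpha> \<in> CONV V E" by auto
    then show "(\<Inter>\<alpha> \<in> X. C \<alpha>) \<in> CONV V E" by (rule conv_inter)
  qed
  have G2: "downward_generic TYPE('i) (CONV V E \<inter> REF V E)"
    unfolding downward_generic_def
  proof (intro allI impI)
    fix X :: "'i set" and lt C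
    assume H: "X \<noteq> {} \<and> strict_linear_order_on X lt \<and>
        (\<forall>\<alpha> \<in> X. \<forall>\<beta> \<in> X. lt \<alpha> \<beta> \<longrightarrow> C \<beta> \<subseteq> C \<alpha>) \<and>
        (\<forall>\<alpha> \<in> X. C \<alpha> \<noteq> {} \<and> C \<alpha> \<in> CONV V E \<inter> REF V E)"
    then have ne: "X \<noteq> {}" and slo: "strict_linear_order_on X lt"
      and dsc: "\<forall>\<alpha> \<in> X. \<forall>\<beta> \<in> X. lt \<alpha> \<beta> \<longrightarrow> C \<beta> \<subseteq> C \<alpha>"
      and cc: "\<forall>\<alpha> \<in> X. C \<alpha> \<in> CONV V E" and cr: "\<forall>\<alpha> \<in> X. C \<alpha> \<in> REF V E" by auto
    let ?S = "\<Inter>\<alpha> \<in> X. C \<alpha>"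
    have SC: "?S \<in> CONV V E" using conv ne cc by blast
    have "?S \<in> REF V E"
      unfolding REF_def
    proof (intro CollectI conjI ballI impI)
      show "?S \<subseteq> V" using SC unfolding CONV_def by blast
    next
      fix v assume vS: "v \<in> ?S" and infd: "infinite (descendants E v)"
      show "infinite (descendants E v \<inter> ?S)"
      proof
        assume finF: "finite (descendants E v \<inter> ?S)"
        define F where "F = descendants E v \<inter> ?S"
        define r where "r = Max (t ` insert v F) + 1"
        have fin2: "finite (t ` insert v F)" using finF F_def by simp
        have Fr: "\<forall>x \<in> insert v F. t x < r"
        proof
          fix x assume "x \<in> insert v F"
          then have "t x \<le> Max (t ` insert v F)" using fin2 by (meson Max_ge imageI)
          then show "t x < r" unfolding r_def by simp
        qed
        define Fr where "Fr = {u. \<exists>p. p \<in> V \<and> t p < r \<and> (p, u) \<in> E \<and> t u \<ge> r \<and> (v, u) \<in> E\<^sup>+}"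
        have "Fr \<subseteq> (\<Union>p \<in> {p \<in> V. t p < r}. {w. (p, w) \<in> E})" unfolding Fr_def by blast
        moreover have "finite (\<Union>p \<in> {p \<in> V. t p < r}. {w. (p, w) \<in> E})"
          using finr finch by auto
        ultimately have finFr: "finite Fr" by (rule finite_subset)
        have meet: "\<forall>\<alpha> \<in> X. C \<alpha> \<inter> Fr \<noteq> {}"
        proof
          fix \<alpha> assume aX: "\<alpha> \<in> X"
          have vC: "v \<in> C \<alpha>" using vS aX by blast
          have CR: "C \<alpha> \<in> REF V E" and CC: "C \<alpha> \<in> CONV V E" using aX cr cc by auto
          have inf: "infinite (descendants E v \<inter> C \<alpha>)" using CR vC infd unfolding REF_def by blast
          have "\<not> (descendants E v \<inter> C \<alpha> \<subseteq> {x \<in> V. t x < r})"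
            using inf finr finite_subset by blast
          then obtain w where wd: "(v, w) \<in> E\<^sup>+" and wC: "w \<in> C \<alpha>" and tw: "t w \<ge> r"
            unfolding descendants_def using trancl_V[OF EV] by fastforce
          have tv: "t v < r" using Fr by blast
          obtain p u where pu: "(v, p) \<in> E\<^sup>*" "(p, u) \<in> E" "t p < r" "t u \<ge> r" "(u, w) \<in> E\<^sup>*"
            using first_cross[OF wd tv tw] by blast
          have vu: "(v, u) \<in> E\<^sup>+" using pu(1,2) by (meson rtrancl_into_trancl1)
          have pV: "p \<in> V" using pu(2) EV by blast
          have uV: "u \<in> V" using pu(2) EV by blast
          have uC: "u \<in> C \<alpha>"
          proof (cases "u = w")
            case True then show ?thesis using wC by simp
          next
            case False
            then have "(u, w) \<in> E\<^sup>+" using pu(5) by (meson rtranclD)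
            then show ?thesis using CC vC wC vu uV unfolding CONV_def by blast
          qed
          have "u \<in> Fr" unfolding Fr_def using pV pu vu by blast
          then show "C \<alpha> \<inter> Fr \<noteq> {}" using uC by blast
        qed
        obtain u where uS: "u \<in> ?S" and uFr: "u \<in> Fr"
          using chain_meets_finite[OF ne slo dsc finFr meet] by blast
        have "u \<in> F" using uS uFr unfolding F_def Fr_def descendants_def by blast
        then have "t u < r" using Fr by blast
        moreover have "t u \<ge> r" using uFr unfolding Fr_def by blast
        ultimately show False by simp
      qed
    qed
    then show "?S \<in> CONV V E \<inter> REF V E" using SC by blast
  qed
  have G3: "downward_generic TYPE('i) (IAP V E)"
    unfolding downward_generic_def
  proof (intro allI impI)
    fix X :: "'i set" and lt C
    assume H: "X \<noteq> {} \<and> strict_linear_order_on X lt \<and>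
        (\<forall>\<alpha> \<in> X. \<forall>\<beta> \<in> X. lt \<alpha> \<beta> \<longrightarrow> C \<beta> \<subseteq> C \<alpha>) \<and>
        (\<forall>\<alpha> \<in> X. C \<alpha> \<noteq> {} \<and> C \<alpha> \<in> IAP V E)"
    then have ne: "X \<noteq> {}" and ci: "\<forall>\<alpha> \<in> X. C \<alpha> \<in> IAP V E" by auto
    obtain a where aX: "a \<in> X" using ne by blast
    let ?S = "\<Inter>\<alpha> \<in> X. C \<alpha>"
    have "?S \<subseteq> V" using ci aX unfolding IAP_def by blast
    moreover have "\<not> (infinite (descendants E v \<inter> ?S) \<and> infinite (?S - descendants E v))"
      if vS: "v \<in> ?S" for v
    proof
      assume I: "infinite (descendants E v \<inter> ?S) \<and> infinite (?S - descendants E v)"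
      have "infinite (descendants E v \<inter> C a)"
        using I aX by (meson INT_lower Int_mono finite_subset subset_refl)
      moreover have "infinite (C a - descendants E v)"
        using I aX by (meson INT_lower Diff_mono finite_subset subset_refl)
      moreover have "v \<in> C a" using vS aX by blast
      ultimately show False using ci aX unfolding IAP_def by blast
    qed
    ultimately show "?S \<in> IAP V E" unfolding IAP_def by blast
  qed
  show ?thesis using G1 G2 G3 by blast
qed

end
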